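(* Let $K=\mathbb{C}(t)=\mathbb{C}(\mathbb{P}^1)$. For every finite set $S$ of points of $\mathbb{P}^1(\mathbb{C})$, strong approximation outside $S$ fails for the $K$-variety $\mathbb{G}_{m,K}$.
   Context: Places of $K$ are identified with the points $P\in\mathbb{P}^1(\mathbb{C})$; $K_P$ is the completion at $P$, with its valuation topology. $\mathbb{A}_K$ is the ring of adèles of $K$ and $\mathbb{A}_K^S$ the adèles outside $S$. A $K$-variety $X$ satisfies strong approximation outside $S$ if the diagonal image of $X(K)$ is dense in the projection of $X(\mathbb{A}_K)$ to $X(\mathbb{A}_K^S)$; for $X=\mathbb{G}_{m,K}$, $X(K)=K^*$ and $X(\mathbb{A}_K^S)$ is the group of idèles outside $S$. *)

theory Defs
  imports "HOL-Analysis.Analysis"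
          "HOL-Computational_Algebra.Formal_Laurent_Series"
          "HOL-Computational_Algebra.Normalized_Fraction"
          "HOL-Computational_Algebra.Polynomial_Factorial"
          "HOL-Computational_Algebra.Field_as_Ring"
begin

text \<open>Places of K are the points of P^1(C): Some a is the point t = a, None is infinity.
  The completion K_P is the field of formal Laurent series C((u)) in a uniformiser u
  (u = t - a, resp. u = 1/t), with its valuation (metric) topology from the library.\<close>

type_synonym funfield = "complex poly fract"
type_synonym place = "complex option"

definition t_at :: "place \<Rightarrow> complex fls" where
  "t_at P = (case P of Some a \<Rightarrow> fls_const a + fls_X | None \<Rightarrow> fls_X_inv)"

definition poly_emb :: "place \<Rightarrow> complex poly \<Rightarrow> complex fls" where
  "poly_emb P p = poly (map_poly fls_const p) (t_at P)"

definition completion_emb :: "place \<Rightarrow> funfield \<Rightarrow> complex fls" where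
  "completion_emb P f = (case quot_of_fract f of (p, q) \<Rightarrow> poly_emb P p / poly_emb P q)"

definition is_unit_at :: "complex fls \<Rightarrow> bool" where
  "is_unit_at x \<longleftrightarrow> x \<noteq> 0 \<and> fls_subdegree x = 0"

text \<open>Ideles outside S (G_m(A_K^S)): families (x_P)_{P not in S} with x_P in K_P^*,
  and x_P in O_P^* for all but finitely many P; represented as functions which are
  0 at the places of S.\<close>
definition ideles :: "place set \<Rightarrow> (place \<Rightarrow> complex fls) set" where
  "ideles S = {x. (\<forall>P\<in>S. x P = 0) \<and> (\<forall>P. P \<notin> S \<longrightarrow> x P \<noteq> 0)
                 \<and> finite {P. P \<notin> S \<and> \<not> is_unit_at (x P)}}"

definition idele_basis :: "place set \<Rightarrow> (place \<Rightarrow> complex fls) set set" where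
  "idele_basis S = {{x \<in> ideles S. (\<forall>P\<in>T. x P \<in> U P) \<and>
                        (\<forall>P. P \<notin> S \<and> P \<notin> T \<longrightarrow> is_unit_at (x P))}
                    | T U. finite T \<and> T \<inter> S = {} \<and> (\<forall>P\<in>T. open (U P) \<and> 0 \<notin> U P)}"

definition idele_top :: "place set \<Rightarrow> (place \<Rightarrow> complex fls) topology" where
  "idele_top S = topology_generated_by (idele_basis S)"

definition diag :: "place set \<Rightarrow> funfield \<Rightarrow> (place \<Rightarrow> complex fls)" where
  "diag S f = (\<lambda>P. if P \<in> S then 0 else completion_emb P f)"

definition proj_away :: "place set \<Rightarrow> (place \<Rightarrow> complex fls) \<Rightarrow> (place \<Rightarrow> complex fls)" where
  "proj_away S x = (\<lambda>P. if P \<in> S then 0 else x P)"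

definition strong_approx_Gm :: "place set \<Rightarrow> bool" where
  "strong_approx_Gm S \<longleftrightarrow>
     proj_away S ` ideles {} \<subseteq> (idele_top S) closure_of (diag S ` {f. f \<noteq> 0})"

end

theory Submission imports Defs "HOL-Computational_Algebra.Fundamental_Theorem_Algebra" begin
unbundle fps_syntax

lemma emb_nth:
  "(\<forall>k<0. poly_emb (Some b) p $$ k = 0) \<and> poly_emb (Some b) p $$ 0 = poly p b"
proof (induction p rule: pCons_induct)
  case 0
  then show ?case by (simp add: poly_emb_def)
next
  case (pCons a p)
  have e: "poly_emb (Some b) (pCons a p) = fls_const a + (fls_const b + fls_X) * poly_emb (Some b) p"
    using pCons(1) by (simp add: poly_emb_def t_at_def map_poly_pCons)
  show ?case using pCons(2) unfolding e
    by (simp add: distrib_right fls_X_times_conv_shift)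
qed

lemma emb_unit:
  assumes q: "quot_of_fract f = (p, q)"
    and u: "is_unit_at (completion_emb (Some b) f)"
  shows "poly p b \<noteq> 0 \<and> poly q b \<noteq> 0 \<and> completion_emb (Some b) f $$ 0 = poly p b / poly q b"
proof -
  define Ep where "Ep = poly_emb (Some b) p"
  define Eq where "Eq = poly_emb (Some b) q"
  have y: "completion_emb (Some b) f = Ep / Eq" using q by (simp add: completion_emb_def Ep_def Eq_def)
  have cop: "coprime p q" using quot_of_fract_in_normalized_fracts[of f] q by (simp add: normalized_fracts_def)
  from u y have nz: "Ep / Eq \<noteq> 0" and sd: "fls_subdegree (Ep / Eq) = 0" by (auto simp: is_unit_at_def)
  have Ep0: "Ep \<noteq> 0" using nz by auto
  have Eq0: "Eq \<noteq> 0" using nz fls_div_by_zero[of Ep] by auto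
  have s: "fls_subdegree Ep = fls_subdegree Eq" using sd fls_divide_subdegree[OF Ep0 Eq0] by simp
  have gp: "fls_subdegree Ep \<ge> 0" using emb_nth[of b p] unfolding Ep_def by (intro fls_subdegree_ge0I) auto
  have gq: "fls_subdegree Eq \<ge> 0" using emb_nth[of b q] unfolding Eq_def by (intro fls_subdegree_ge0I) auto
  have np: "Ep $$ 0 = poly p b" and nq: "Eq $$ 0 = poly q b" using emb_nth unfolding Ep_def Eq_def by auto
  have both: "poly p b = 0 \<longleftrightarrow> poly q b = 0"
  proof -
    have "poly p b = 0 \<longleftrightarrow> fls_subdegree Ep \<noteq> 0"
    proof
      assume "poly p b = 0"
      hence "\<And>k. k < 1 \<Longrightarrow> Ep $$ k = 0" using np emb_nth[of b p] unfolding Ep_def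
        by (metis int_one_le_iff_zero_less linorder_not_le order_le_less)
      hence "fls_subdegree Ep \<ge> 1" using Ep0 by (intro fls_subdegree_geI) auto
      thus "fls_subdegree Ep \<noteq> 0" by simp
    next
      assume "fls_subdegree Ep \<noteq> 0"
      hence "0 < fls_subdegree Ep" using gp by simp
      thus "poly p b = 0" using np by simp
    qed
    moreover have "poly q b = 0 \<longleftrightarrow> fls_subdegree Eq \<noteq> 0"
    proof
      assume "poly q b = 0"
      hence "\<And>k. k < 1 \<Longrightarrow> Eq $$ k = 0" using nq emb_nth[of b q] unfolding Eq_def
        by (metis int_one_le_iff_zero_less linorder_not_le order_le_less)
      hence "fls_subdegree Eq \<ge> 1" using Eq0 by (intro fls_subdegree_geI) auto
      thus "fls_subdegree Eq \<noteq> 0" by simp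
    next
      assume "fls_subdegree Eq \<noteq> 0"
      hence "0 < fls_subdegree Eq" using gq by simp
      thus "poly q b = 0" using nq by simp
    qed
    ultimately show ?thesis using s by simp
  qed
  have pb: "poly p b \<noteq> 0"
  proof
    assume "poly p b = 0"
    hence "[:-b,1:] dvd p" "[:-b,1:] dvd q" using both by (auto simp: poly_eq_0_iff_dvd)
    hence "is_unit [:-b,1::complex:]" using cop coprime_common_divisor by blast
    thus False by (simp add: is_unit_iff_degree)
  qed
  hence qb: "poly q b \<noteq> 0" using both by simp
  have "fls_subdegree Ep = 0" using pb np gp by (metis fls_eq0_below_subdegree order_le_less)
  hence "fls_subdegree Eq = 0" using s by simp
  hence "(Ep / Eq) $$ 0 = Ep $$ 0 / Eq $$ 0" using fls_divide_nth_base[of Ep Eq] \<open>fls_subdegree Ep = 0\<close> by simp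
  thus ?thesis using pb qb y np nq by simp
qed

lemma poly_prod_roots:
  fixes p :: "complex poly"
  assumes "p \<noteq> 0" "finite A" "\<And>z. poly p z = 0 \<Longrightarrow> z \<in> A"
  shows "poly p b = lead_coeff p * (\<Prod>z\<in>A. (b - z) ^ order z p)"
proof -
  have fin: "finite {z. poly p z = 0}" using assms(1) poly_roots_finite by blast
  have "poly p b = lead_coeff p * (\<Prod>z|poly p z = 0. (b - z) ^ order z p)"
    by (subst complex_poly_decompose[symmetric, of p]) (simp add: poly_prod)
  also have "(\<Prod>z|poly p z = 0. (b - z) ^ order z p) = (\<Prod>z\<in>A. (b - z) ^ order z p)"
  proof (rule prod.mono_neutral_left)
    show "\<forall>i\<in>A - {z. poly p z = 0}. (b - i) ^ order i p = 1"
    proof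
      fix i assume "i \<in> A - {z. poly p z = 0}"
      hence "order i p = 0" using order_root[of p i] assms(1) by auto
      thus "(b - i) ^ order i p = 1" by simp
    qed
  qed (use assms fin in auto)
  finally show ?thesis .
qed

lemma ball_unit:
  fixes c y :: "complex fls"
  assumes "c $$ 0 \<noteq> 0" "\<forall>k<0. c $$ k = 0" "dist c y < 1"
  shows "is_unit_at y \<and> y $$ 0 = c $$ 0"
proof -
  have "\<forall>k\<le>0. y $$ k = c $$ k"
  proof (cases "c = y")
    case False
    have "fls_subdegree (c - y) > 0"
    proof (rule ccontr)
      assume "\<not> fls_subdegree (c - y) > 0"
      hence "dist c y \<ge> 1" using False
        by (cases "fls_subdegree (c - y) = 0") (auto simp: dist_fls_def)
      thus False using assms(3) by simp
    qed
    show ?thesis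
    proof (intro allI impI)
      fix k :: int assume "k \<le> 0"
      hence "(c - y) $$ k = 0" using \<open>fls_subdegree (c - y) > 0\<close> by (intro fls_eq0_below_subdegree) simp
      thus "y $$ k = c $$ k" by simp
    qed
  qed simp
  hence y0: "y $$ 0 = c $$ 0" and yk: "\<And>k. k < 0 \<Longrightarrow> y $$ k = 0" using assms(2) by auto
  have "y \<noteq> 0" using y0 assms(1) by auto
  moreover have "fls_subdegree y = 0" using y0 yk assms(1) by (intro fls_subdegree_eqI) auto
  ultimately show ?thesis using y0 unfolding is_unit_at_def by simp
qed


lemma ratio_in_M:
  fixes p :: "complex poly"
  assumes "finite A" "\<And>b. b \<notin> A \<Longrightarrow> poly p b \<noteq> 0" "b0 \<notin> A" "b1 \<notin> A"
  shows "poly p b1 / poly p b0 \<in> (\<lambda>n. \<Prod>z\<in>A. ((b1 - z) / (b0 - z)) ^ n z) ` (PiE A (\<lambda>_. UNIV :: nat set))"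
proof -
  have p0: "p \<noteq> 0" using assms(2,3) by auto
  have r: "\<And>z. poly p z = 0 \<Longrightarrow> z \<in> A" using assms(2) by blast
  have lc: "lead_coeff p \<noteq> 0" using p0 by simp
  have nz: "(\<Prod>z\<in>A. (b0 - z) ^ order z p) \<noteq> 0" using assms(1,3) by (auto simp: prod_zero_iff)
  have "poly p b1 / poly p b0 = (\<Prod>z\<in>A. (b1 - z) ^ order z p) / (\<Prod>z\<in>A. (b0 - z) ^ order z p)"
    using poly_prod_roots[OF p0 assms(1) r, of b1] poly_prod_roots[OF p0 assms(1) r, of b0] lc nz
    by simp
  also have "\<dots> = (\<Prod>z\<in>A. ((b1 - z) / (b0 - z)) ^ order z p)"
    by (simp add: prod_dividef power_divide)
  also have "\<dots> = (\<Prod>z\<in>A. ((b1 - z) / (b0 - z)) ^ restrict (\<lambda>z. order z p) A z)"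
    by (rule prod.cong) auto
  finally show ?thesis by (intro image_eqI[of _ _ "restrict (\<lambda>z. order z p) A"]) auto
qed

theorem proposition4p1:
  fixes S :: "complex option set"
  assumes "finite S"
  shows "\<not> strong_approx_Gm S"
proof
  assume sa: "strong_approx_Gm S"
  define A where "A = {a. Some a \<in> S}"
  have finA: "finite A" unfolding A_def using finite_vimageI[OF assms, of Some] by (simp add: vimage_def)
  have infC: "infinite (UNIV :: complex set)" using uncountable_UNIV_complex countable_finite by blast
  obtain b0 where b0: "b0 \<notin> A" using ex_new_if_finite[OF infC finA] by blast
  obtain b1 where b1: "b1 \<notin> insert b0 A" using ex_new_if_finite[OF infC] finA by blast
  define M where "M = (\<lambda>n. \<Prod>z\<in>A. ((b1 - z) / (b0 - z)) ^ n z) ` (PiE A (\<lambda>_. UNIV :: nat set))"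
  have cM: "countable M" unfolding M_def using finA by (intro countable_image countable_PiE) auto
  define D where "D = (\<lambda>(m1, m2). m1 / m2) ` (M \<times> M)"
  have cD: "countable (insert 0 D)" unfolding D_def using cM by auto
  have "insert 0 D \<noteq> UNIV"
  proof
    assume "insert 0 D = UNIV"
    thus False using cD uncountable_UNIV_complex by metis
  qed
  then obtain lam :: complex where lam: "lam \<notin> insert 0 D" by blast
  define x0 :: "place \<Rightarrow> complex fls" where "x0 = (\<lambda>P. if P = Some b1 then fls_const lam else 1)"
  have unit1: "is_unit_at (1::complex fls)" by (simp add: is_unit_at_def)
  have unitl: "is_unit_at (fls_const lam)" using lam by (simp add: is_unit_at_def)
  have x0i: "x0 \<in> ideles {}" unfolding ideles_def x0_def using unit1 unitl lam by auto
  define x where "x = proj_away S x0"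
  have xin: "x \<in> proj_away S ` ideles {}" using x0i x_def by blast
  define T where "T = {Some b0, Some b1}"
  define U where "U = (\<lambda>P. if P = Some b1 then ball (fls_const lam) 1 else ball (1::complex fls) 1)"
  define B where "B = {y \<in> ideles S. (\<forall>P\<in>T. y P \<in> U P) \<and> (\<forall>P. P \<notin> S \<and> P \<notin> T \<longrightarrow> is_unit_at (y P))}"
  have S01: "Some b0 \<notin> S" "Some b1 \<notin> S" using b0 b1 A_def by auto
  have bl1: "is_unit_at y \<and> y $$ 0 = 1" if "y \<in> ball (1::complex fls) 1" for y
    using ball_unit[of 1 y] that by (simp add: mem_ball)
  have bll: "is_unit_at y \<and> y $$ 0 = lam" if "y \<in> ball (fls_const lam) 1" for y
    using ball_unit[of "fls_const lam" y] that lam by (simp add: mem_ball)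
  have notunit0: "\<not> is_unit_at (0::complex fls)" by (simp add: is_unit_at_def)
  have UP: "\<forall>P\<in>T. open (U P) \<and> 0 \<notin> U P"
    unfolding T_def U_def using bl1[of 0] bll[of 0] notunit0 by auto
  have "B \<in> idele_basis S"
    unfolding idele_basis_def B_def
    apply (rule CollectI, rule exI[of _ T], rule exI[of _ U])
    using UP S01 by (auto simp: T_def)
  hence oB: "openin (idele_top S) B" unfolding idele_top_def by (rule topology_generated_by_Basis)
  have xB: "x \<in> B"
    unfolding B_def
  proof (intro CollectI conjI allI ballI impI)
    have "finite {P. \<not> is_unit_at (x0 P)}" using x0i unfolding ideles_def by simp
    hence "finite {P. P \<notin> S \<and> \<not> is_unit_at (x P)}"
      by (rule rev_finite_subset) (auto simp: x_def proj_away_def)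
    thus "x \<in> ideles S" using x0i unfolding ideles_def x_def proj_away_def by auto
    show "x P \<in> U P" if "P \<in> T" for P
      using that S01 unfolding T_def U_def x_def proj_away_def x0_def by auto
    show "is_unit_at (x P)" if "P \<notin> S \<and> P \<notin> T" for P
      using that unit1 unitl unfolding T_def x_def proj_away_def x0_def by auto
  qed
  have "x \<in> (idele_top S) closure_of (diag S ` {f. f \<noteq> 0})" using sa xin unfolding strong_approx_Gm_def by blast
  then obtain y where "y \<in> diag S ` {f. f \<noteq> 0}" "y \<in> B" using oB xB unfolding in_closure_of by blast
  then obtain f where f0: "f \<noteq> 0" and fB: "diag S f \<in> B" by blast
  obtain p q where pq: "quot_of_fract f = (p, q)" by (cases "quot_of_fract f")
  have unitb: "is_unit_at (completion_emb (Some b) f)" if "b \<notin> A" "b \<noteq> b0" "b \<noteq> b1" for b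
    using fB that unfolding B_def diag_def T_def A_def by auto
  have v0: "is_unit_at (completion_emb (Some b0) f) \<and> completion_emb (Some b0) f $$ 0 = 1"
  proof -
    have b01: "b0 \<noteq> b1" using b1 by auto
    have "completion_emb (Some b0) f \<in> ball 1 1"
      using fB S01 b01 unfolding B_def diag_def T_def U_def by auto
    thus ?thesis using bl1 by blast
  qed
  have v1: "is_unit_at (completion_emb (Some b1) f) \<and> completion_emb (Some b1) f $$ 0 = lam"
    using fB S01 bll unfolding B_def diag_def T_def U_def by auto
  have unitall: "is_unit_at (completion_emb (Some b) f)" if "b \<notin> A" for b
    using unitb[OF that] v0 v1 by blast
  have pnz: "poly p b \<noteq> 0" and qnz: "poly q b \<noteq> 0" if "b \<notin> A" for b
    using emb_unit[OF pq unitall[OF that]] by auto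
  have e0: "poly p b0 / poly q b0 = 1" using emb_unit[OF pq unitall[OF b0]] v0 by auto
  have e1: "poly p b1 / poly q b1 = lam" using emb_unit[OF pq unitall] v1 b1 by auto
  have rp: "poly p b1 / poly p b0 \<in> M" unfolding M_def using ratio_in_M[OF finA, of p b0 b1] pnz b0 b1 by auto
  have rq: "poly q b1 / poly q b0 \<in> M" unfolding M_def using ratio_in_M[OF finA, of q b0 b1] qnz b0 b1 by auto
  have "lam = (poly p b1 / poly p b0) / (poly q b1 / poly q b0)"
    using e0 e1 pnz[OF b0] qnz[OF b0] by (auto simp: field_simps)
  hence "lam \<in> D" unfolding D_def using rp rq
    by (intro image_eqI[of _ _ "(poly p b1 / poly p b0, poly q b1 / poly q b0)"]) auto
  thus False using lam by simp
qed

end
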